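(* Let $f_{SN_3}(x)=\sqrt{\frac{x^2+1}{2}}-\frac{x+\sqrt x+1}{3}$ for $x\in(0,\infty)$, let $f_{SN_3}^*(u)=u\,f_{SN_3}\!\left(\frac{1-u}{u}\right)$ for $u\in(0,1)$, extended by continuity to $[0,1]$ (explicitly $f_{SN_3}^*(u)=\frac{\sqrt2}{2}\sqrt{u^2+(1-u)^2}-\frac13\left(1+\sqrt{u(1-u)}\right)$), and define $\overline M_{SN_3}(C_1,C_2)=E_X\{f_{SN_3}^*(P(C_2\mid x))\}$. Then $$P_e\le \frac12\left[1-\frac{6}{3\sqrt2-2}\,\overline M_{SN_3}(C_1,C_2)\right].$$
   Context: Two-class decision problem: classes $C_1,C_2$, an observation $x$ in a space $\mathrm X$ with density $p(x)$, and a posteriori probabilities $P(C_1\mid x),P(C_2\mid x)\ge0$ with $P(C_1\mid x)+P(C_2\mid x)=1$. $E_X\{g(x)\}=\int_{\mathrm X} g(x)p(x)\,dx$. $P_e=E_X\{\min(P(C_1\mid x),P(C_2\mid x))\}$ is the Bayesian probability of error. *)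

theory Defs
  imports "HOL-Probability.Probability"
begin

definition f_SN3 :: "real \<Rightarrow> real" where
  "f_SN3 x = sqrt ((x\<^sup>2 + 1) / 2) - (x + sqrt x + 1) / 3"

definition f_SN3_star :: "real \<Rightarrow> real" where
  "f_SN3_star u =
     (if 0 < u \<and> u < 1 then u * f_SN3 ((1 - u) / u)
      else sqrt 2 / 2 * sqrt (u\<^sup>2 + (1 - u)\<^sup>2) - (1 + sqrt (u * (1 - u))) / 3)"

text \<open>Bayesian probability of error and the measure M_SN3, where M is the distribution
  of the observation x (density p) and q x = P(C2|x), so P(C1|x) = 1 - q x.\<close>
definition bayes_error :: "'a measure \<Rightarrow> ('a \<Rightarrow> real) \<Rightarrow> real" where
  "bayes_error M q = (\<integral>x. min (1 - q x) (q x) \<partial>M)"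

definition M_SN3 :: "'a measure \<Rightarrow> ('a \<Rightarrow> real) \<Rightarrow> real" where
  "M_SN3 M q = (\<integral>x. f_SN3_star (q x) \<partial>M)"

end

theory Submission
  imports Defs
begin

definition G :: "real \<Rightarrow> real" where
  "G u = sqrt 2 / 2 * sqrt (u\<^sup>2 + (1 - u)\<^sup>2) - (1 + sqrt (u * (1 - u))) / 3"

lemma star_eq: assumes "0 \<le> u" "u \<le> 1" shows "f_SN3_star u = G u"
proof (cases "0 < u \<and> u < 1")
  case True
  hence u: "0 < u" "u < 1" by auto
  have e1: "((1 - u) / u)\<^sup>2 + 1 = (u\<^sup>2 + (1-u)\<^sup>2) / u\<^sup>2" using u by (simp add: field_simps power2_eq_square)
  have "sqrt (((1 - u) / u)\<^sup>2 + 1) / sqrt 2 = sqrt (u\<^sup>2 + (1-u)\<^sup>2) / (u * sqrt 2)"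
    unfolding e1 using u by (simp add: real_sqrt_divide)
  hence A: "u * sqrt ((((1 - u) / u)\<^sup>2 + 1) / 2) = sqrt 2 / 2 * sqrt (u\<^sup>2 + (1 - u)\<^sup>2)"
  proof -
    assume h: "sqrt (((1 - u) / u)\<^sup>2 + 1) / sqrt 2 = sqrt (u\<^sup>2 + (1-u)\<^sup>2) / (u * sqrt 2)"
    have "u * sqrt ((((1 - u) / u)\<^sup>2 + 1) / 2) = u * (sqrt (((1 - u) / u)\<^sup>2 + 1) / sqrt 2)"
      by (simp add: real_sqrt_divide)
    also have "\<dots> = sqrt (u\<^sup>2 + (1-u)\<^sup>2) / sqrt 2" unfolding h using u by simp
    also have "\<dots> = sqrt 2 / 2 * sqrt (u\<^sup>2 + (1 - u)\<^sup>2)"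
    proof -
      have "sqrt 2 * sqrt 2 = 2" by simp
      thus ?thesis by (simp add: field_simps)
    qed
    finally show ?thesis .
  qed
  have "u * sqrt ((1 - u) / u) = sqrt (u*u) * sqrt ((1-u)/u)" using u by simp
  also have "\<dots> = sqrt (u * u * ((1-u)/u))" by (rule real_sqrt_mult[symmetric])
  also have "u * u * ((1-u)/u) = u * (1 - u)" using u by (simp add: field_simps)
  finally have B: "u * sqrt ((1 - u) / u) = sqrt (u * (1-u))" .
  have "f_SN3_star u = u * sqrt ((((1 - u) / u)\<^sup>2 + 1) / 2) - ((1-u) + u * sqrt ((1 - u) / u) + u) / 3"
    using u by (simp add: f_SN3_star_def f_SN3_def field_simps)
  then show ?thesis unfolding A B G_def by simp
next
  case False thus ?thesis unfolding f_SN3_star_def G_def by auto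
qed

lemma key: assumes "0 \<le> u" "u \<le> 1"
  shows "min (1 - u) u \<le> 1 / 2 * (1 - 6 / (3 * sqrt 2 - 2) * G u)"
proof -
  define t where "t = \<bar>1 - 2*u\<bar>"
  define s where "s = sqrt 2"
  have t: "0 \<le> t" "t \<le> 1" using assms by (auto simp: t_def)
  have s: "s\<^sup>2 = 2" "s \<ge> 0" "s > 1" by (auto simp: s_def)
  have e1: "u\<^sup>2 + (1 - u)\<^sup>2 = (1 + t\<^sup>2)/2" by (simp add: t_def power2_eq_square algebra_simps)
  have e2: "u * (1 - u) = (1 - t\<^sup>2)/4" by (simp add: t_def power2_eq_square algebra_simps)
  have mn: "min (1 - u) u = (1 - t)/2" by (auto simp: t_def min_def)
  define a where "a = sqrt (1 + t\<^sup>2)"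
  define b where "b = sqrt (1 - t\<^sup>2)"
  have ga: "sqrt 2 / 2 * sqrt (u\<^sup>2 + (1 - u)\<^sup>2) = a / 2"
    unfolding e1 a_def by (simp add: real_sqrt_divide)
  have gb: "sqrt (u * (1 - u)) = b / 2"
    unfolding e2 b_def by (simp add: real_sqrt_divide)
  have Gv: "G u = a/2 - (1 + b/2)/3" unfolding G_def ga gb ..
  have a_le: "a \<le> 1 + (s - 1) * t"
  proof -
    have "1 + t\<^sup>2 \<le> (1 + (s - 1) * t)\<^sup>2"
    proof -
      have "(1 + (s - 1) * t)\<^sup>2 = 1 + 2*(s-1)*t + (s - 1) * (s - 1) * (t * t)" by (simp add: power2_eq_square algebra_simps)
      also have "\<dots> = 1 + 2 * (s - 1) * t + (3 - 2 * s) * (t * t)"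
      proof -
        have "(s - 1) * (s - 1) = 3 - 2 * s" using s by (simp add: algebra_simps power2_eq_square)
        thus ?thesis by simp
      qed
      finally have E: "(1 + (s - 1) * t)\<^sup>2 = 1 + 2 * (s - 1) * t + (3 - 2 * s) * (t * t)" .
      have "(s-1)*(t*t) \<le> (s-1)*t" using t s by (intro mult_left_mono) (auto simp: mult_le_cancel_right1 intro: mult_left_le_one_le)
      thus ?thesis unfolding E by (simp add: power2_eq_square algebra_simps)
    qed
    moreover have "0 \<le> 1 + (s - 1) * t" using t s by simp
    ultimately show ?thesis unfolding a_def by (intro real_le_lsqrt)
  qed
  have b_ge: "1 - t \<le> b"
    unfolding b_def using t by (intro real_le_rsqrt) (auto simp: power2_eq_square algebra_simps mult_left_mono)
  have k: "3 * s - 2 > 0" using s by simp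
  have ineq: "3*a - 2 - b \<le> (3 * s - 2) * t" using a_le b_ge by (simp add: algebra_simps)
  have "6 / (3 * s - 2) * G u \<le> t"
    using ineq k unfolding Gv by (simp add: divide_simps algebra_simps)
  thus ?thesis unfolding mn s_def by simp
qed

lemma L: fixes P R :: real assumes "P \<le> 1" "0 \<le> P" "0 \<le> R" "R \<le> 1"
  shows "\<bar>P - (1 + R) / 3\<bar> \<le> 2"
  using assms unfolding add_divide_distrib abs_le_iff by linarith

theorem mainTheorem3:
  fixes M :: "'a measure" and q :: "'a \<Rightarrow> real"
  assumes "prob_space M"
    and "q \<in> borel_measurable M"
    and "\<And>x. x \<in> space M \<Longrightarrow> 0 \<le> q x \<and> q x \<le> 1"
  shows "bayes_error M q \<le> 1 / 2 * (1 - 6 / (3 * sqrt 2 - 2) * M_SN3 M q)"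
proof -
  interpret prob_space M by fact
  define c where "c = 6 / (3 * sqrt 2 - 2)"
  have Gm: "(\<lambda>x. G (q x)) \<in> borel_measurable M" unfolding G_def using assms(2) by measurable
  have Gb: "\<bar>G (q x)\<bar> \<le> 2" if "x \<in> space M" for x
  proof -
    have u: "0 \<le> q x" "q x \<le> 1" using assms(3) that by auto
    have "q x * q x \<le> q x" "(1 - q x) * (1 - q x) \<le> 1 - q x" using u
      by (auto intro: mult_left_le_one_le)
    hence "q x ^ 2 + (1 - q x)^2 \<le> 1" by (simp add: power2_eq_square)
    hence A: "sqrt (q x ^ 2 + (1 - q x)^2) \<le> 1" by simp
    have "q x * (1 - q x) \<le> 1" using u by (auto intro: mult_le_one)
    hence B: "sqrt (q x * (1 - q x)) \<le> 1" by simp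
    have C: "sqrt 2 \<le> 2" using real_sqrt_le_iff[of 2 4] by simp
    have "sqrt 2 / 2 * sqrt (q x ^ 2 + (1 - q x)^2) \<le> 1"
    proof -
      have "sqrt 2 * sqrt (q x ^ 2 + (1 - q x)^2) \<le> 2 * 1" using A C by (intro mult_mono) auto
      thus ?thesis by simp
    qed
    moreover have "0 \<le> sqrt 2 / 2 * sqrt (q x ^ 2 + (1 - q x)^2)" by simp
    moreover have "0 \<le> sqrt (q x * (1 - q x))" using u by simp
    show ?thesis unfolding G_def
      by (rule L) (use \<open>0 \<le> sqrt (q x * (1 - q x))\<close> \<open>sqrt 2 / 2 * sqrt (q x ^ 2 + (1 - q x)^2) \<le> 1\<close> B in auto)
  qed
  have Gi: "integrable M (\<lambda>x. G (q x))"
    by (rule integrable_const_bound[where B=2]) (use Gb Gm in auto)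
  have Mi: "integrable M (\<lambda>x. min (1 - q x) (q x))"
    by (rule integrable_const_bound[where B=1]) (use assms(2,3) in auto)
  have MS: "M_SN3 M q = (\<integral>x. G (q x) \<partial>M)"
    unfolding M_SN3_def using assms(3) by (intro Bochner_Integration.integral_cong) (auto simp: star_eq)
  have "bayes_error M q \<le> (\<integral>x. 1/2 * (1 - c * G (q x)) \<partial>M)"
    unfolding bayes_error_def c_def using Mi Gi assms(3) key by (intro integral_mono) auto
  also have "\<dots> = 1/2 * (1 - c * M_SN3 M q)"
    unfolding MS using Gi by (simp add: prob_space)
  finally show ?thesis unfolding c_def .
qed

end
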